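(* Let $G$ be a graph and let $c_1,\ldots,c_m$ be $m$ proper colorings of $G$. Then there is a vertex of $G$ that, for each $i\in[m]$, is adjacent to vertices of at least $\left\lfloor\frac{1}{2m}\operatorname{ind}(\operatorname{Hom}(K_2,G))\right\rfloor+1$ distinct colors in the coloring $c_i$.
   Context: For a graph $G=(V,E)$, $\operatorname{Hom}(K_2,G)$ is the poset whose elements are the pairs $(A,B)$ of non-empty disjoint subsets of $V$ such that every vertex of $A$ is adjacent to every vertex of $B$, ordered by $(A,B)\preceq(A',B')$ iff $A\subseteq A'$ and $B\subseteq B'$; it is identified with its order complex (vertices are the poset elements, simplices are the chains), which carries the free $\mathbb{Z}_2$-action $(A,B)\mapsto(B,A)$. For a free simplicial $\mathbb{Z}_2$-complex $\mathsf{K}$, its $\mathbb{Z}_2$-index $\operatorname{ind}(\mathsf{K})$ is the minimal $d$ such that there is a continuous map from (the geometric realization of) $\mathsf{K}$ to the sphere $\mathcal{S}^d$ commuting with the $\mathbb{Z}_2$-actions (the action on $\mathcal{S}^d$ being the antipodal map). *)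

theory Defs
  imports "HOL-Analysis.Analysis"
begin

definition simple_graph :: "'v set \<Rightarrow> ('v \<Rightarrow> 'v \<Rightarrow> bool) \<Rightarrow> bool" where
  "simple_graph V E \<longleftrightarrow> finite V \<and> (\<forall>u v. E u v \<longrightarrow> u \<in> V \<and> v \<in> V)
     \<and> (\<forall>u v. E u v \<longrightarrow> E v u) \<and> (\<forall>v. \<not> E v v)"

definition proper_coloring :: "'v set \<Rightarrow> ('v \<Rightarrow> 'v \<Rightarrow> bool) \<Rightarrow> ('v \<Rightarrow> 'c) \<Rightarrow> bool" where
  "proper_coloring V E c \<longleftrightarrow> (\<forall>u\<in>V. \<forall>v\<in>V. E u v \<longrightarrow> c u \<noteq> c v)"

definition nbhd :: "'v set \<Rightarrow> ('v \<Rightarrow> 'v \<Rightarrow> bool) \<Rightarrow> 'v \<Rightarrow> 'v set" where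
  "nbhd V E v = {u \<in> V. E v u}"

definition hom_K2 :: "'v set \<Rightarrow> ('v \<Rightarrow> 'v \<Rightarrow> bool) \<Rightarrow> ('v set \<times> 'v set) set" where
  "hom_K2 V E = {(A,B). A \<subseteq> V \<and> B \<subseteq> V \<and> A \<noteq> {} \<and> B \<noteq> {} \<and> A \<inter> B = {}
                   \<and> (\<forall>a\<in>A. \<forall>b\<in>B. E a b)}"

definition hom_le :: "('v set \<times> 'v set) \<Rightarrow> ('v set \<times> 'v set) \<Rightarrow> bool" where
  "hom_le p q \<longleftrightarrow> fst p \<subseteq> fst q \<and> snd p \<subseteq> snd q"

text \<open>Geometric realization of the order complex of Hom(K_2,G): points are
  barycentric coordinate functions on the poset elements, nonnegative, summing to 1,
  whose support is a chain; topologised as a subspace of the product space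
  (the poset is finite, so this is the usual realization).\<close>
definition hom_realization :: "'v set \<Rightarrow> ('v \<Rightarrow> 'v \<Rightarrow> bool) \<Rightarrow> (('v set \<times> 'v set) \<Rightarrow> real) set" where
  "hom_realization V E = {x. (\<forall>p. x p \<ge> 0) \<and> (\<forall>p. p \<notin> hom_K2 V E \<longrightarrow> x p = 0)
      \<and> (\<Sum>p\<in>hom_K2 V E. x p) = 1
      \<and> (\<forall>p q. x p \<noteq> 0 \<longrightarrow> x q \<noteq> 0 \<longrightarrow> hom_le p q \<or> hom_le q p)}"

definition hom_realization_top :: "'v set \<Rightarrow> ('v \<Rightarrow> 'v \<Rightarrow> bool) \<Rightarrow> (('v set \<times> 'v set) \<Rightarrow> real) topology" where
  "hom_realization_top V E = subtopology (product_topology (\<lambda>_. euclideanreal) UNIV) (hom_realization V E)"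

definition hom_swap :: "(('v set \<times> 'v set) \<Rightarrow> real) \<Rightarrow> (('v set \<times> 'v set) \<Rightarrow> real)" where
  "hom_swap x = (\<lambda>(A,B). x (B,A))"

text \<open>The sphere with n coordinates, i.e. S^(n-1) \<subseteq> R^n (n = 0 gives the empty sphere S^(-1)).\<close>
definition sphere_top :: "nat \<Rightarrow> (nat \<Rightarrow> real) topology" where
  "sphere_top n = subtopology (product_topology (\<lambda>_. euclideanreal) UNIV)
      {y. (\<Sum>i<n. (y i)\<^sup>2) = 1 \<and> (\<forall>i\<ge>n. y i = 0)}"

definition hom_equivariant_map :: "'v set \<Rightarrow> ('v \<Rightarrow> 'v \<Rightarrow> bool) \<Rightarrow> nat \<Rightarrow> bool" where
  "hom_equivariant_map V E n \<longleftrightarrow> (\<exists>f. continuous_map (hom_realization_top V E) (sphere_top n) f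
      \<and> (\<forall>x\<in>hom_realization V E. f (hom_swap x) = (\<lambda>i. - f x i)))"

text \<open>Z_2-index of Hom(K_2,G): minimal d with an equivariant map to S^d
  (d = -1 only when the complex is empty).\<close>
definition hom_index :: "'v set \<Rightarrow> ('v \<Rightarrow> 'v \<Rightarrow> bool) \<Rightarrow> int" where
  "hom_index V E = int (LEAST n. hom_equivariant_map V E n) - 1"

end

theory Submission
  imports Defs "HOL-Computational_Algebra.Polynomial"
begin

definition wvec :: "nat \<Rightarrow> nat \<Rightarrow> ('v \<Rightarrow> nat) \<Rightarrow> (nat \<Rightarrow> 'v \<Rightarrow> 'c) \<Rightarrow> ('c \<Rightarrow> real) \<Rightarrow> 'v \<Rightarrow> nat \<Rightarrow> real" where
 "wvec m k I c code v j = (if j < 2*m*k \<and> I v = j div (2*k) + 1 then code (c (I v) v) ^ (j mod (2*k)) else 0)"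

definition phi where "phi m k I c code p j = (\<Sum>a\<in>fst p. wvec m k I c code a j) - (\<Sum>b\<in>snd p. wvec m k I c code b j)"

definition Fm where "Fm V E m k I c code x j = (\<Sum>p\<in>hom_K2 V E. x p * phi m k I c code p j)"

definition alpha where "alpha V E x v = (\<Sum>p\<in>hom_K2 V E. if v \<in> fst p then x p else 0)"
definition beta where "beta V E x v = (\<Sum>p\<in>hom_K2 V E. if v \<in> snd p then x p else 0)"

lemma finite_hom: "finite V \<Longrightarrow> finite (hom_K2 V E)"
proof -
  assume "finite V"
  have "hom_K2 V E \<subseteq> Pow V \<times> Pow V" by (auto simp: hom_K2_def)
  thus ?thesis using \<open>finite V\<close> finite_subset by blast
qed

lemma sum_restrict_V: "finite V \<Longrightarrow> A \<subseteq> V \<Longrightarrow> (\<Sum>a\<in>A. f a) = (\<Sum>v\<in>V. if v \<in> A then f v else (0::real))"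
  proof -
  assume "finite V" "A \<subseteq> V"
  hence "V \<inter> A = A" by blast
  thus ?thesis using sum.inter_restrict[OF \<open>finite V\<close>, of f A] by simp
qed

lemma Fm_alt:
  assumes "finite V"
  shows "Fm V E m k I c code x j = (\<Sum>v\<in>V. (alpha V E x v - beta V E x v) * wvec m k I c code v j)"
proof -
  let ?w = "\<lambda>v. wvec m k I c code v j"
  let ?H = "hom_K2 V E"
  have "Fm V E m k I c code x j = (\<Sum>p\<in>?H. \<Sum>v\<in>V. x p * ((if v \<in> fst p then ?w v else 0) - (if v \<in> snd p then ?w v else 0)))"
    unfolding Fm_def phi_def
  proof (rule sum.cong[OF refl])
    fix p assume "p \<in> ?H"
    hence s: "fst p \<subseteq> V" "snd p \<subseteq> V" by (auto simp: hom_K2_def)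
    show "x p * ((\<Sum>a\<in>fst p. ?w a) - (\<Sum>b\<in>snd p. ?w b)) = (\<Sum>v\<in>V. x p * ((if v \<in> fst p then ?w v else 0) - (if v \<in> snd p then ?w v else 0)))"
      by (simp add: sum_restrict_V[OF assms s(1)] sum_restrict_V[OF assms s(2)] sum_subtractf[symmetric] sum_distrib_left)
  qed
  also have "\<dots> = (\<Sum>v\<in>V. \<Sum>p\<in>?H. x p * ((if v \<in> fst p then ?w v else 0) - (if v \<in> snd p then ?w v else 0)))"
    by (rule sum.swap)
  also have "\<dots> = (\<Sum>v\<in>V. (alpha V E x v - beta V E x v) * ?w v)"
    unfolding alpha_def beta_def
    by (rule sum.cong[OF refl]) (simp add: sum_distrib_right sum_subtractf[symmetric] sum_distrib_left, rule sum.cong, auto simp: algebra_simps)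
  finally show ?thesis .
qed

lemma pos_sum_witness:
  fixes f :: "'a \<Rightarrow> real"
  assumes "sum f A \<noteq> 0" shows "\<exists>p\<in>A. f p \<noteq> 0"
  using assms by (meson sum.neutral)

lemma ab_props:
  assumes G: "simple_graph V E" and x: "x \<in> hom_realization V E"
  shows "\<And>v. alpha V E x v \<ge> 0" "\<And>v. beta V E x v \<ge> 0"
    and "\<And>v u. alpha V E x v > 0 \<Longrightarrow> beta V E x u > 0 \<Longrightarrow> E v u"
    and "\<exists>a\<in>V. alpha V E x a > 0" and "\<exists>b\<in>V. beta V E x b > 0"
proof -
  have fin: "finite (hom_K2 V E)" using G finite_hom by (auto simp: simple_graph_def)
  have xr: "\<forall>p. x p \<ge> 0" "(\<Sum>p\<in>hom_K2 V E. x p) = 1"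
    "\<forall>p q. x p \<noteq> 0 \<longrightarrow> x q \<noteq> 0 \<longrightarrow> hom_le p q \<or> hom_le q p"
    using x by (auto simp: hom_realization_def)
  show "\<And>v. alpha V E x v \<ge> 0" "\<And>v. beta V E x v \<ge> 0"
    unfolding alpha_def beta_def using xr by (auto intro: sum_nonneg)
  show "\<And>v u. alpha V E x v > 0 \<Longrightarrow> beta V E x u > 0 \<Longrightarrow> E v u"
  proof -
    fix v u assume a: "alpha V E x v > 0" and b: "beta V E x u > 0"
    from a obtain p where p: "p \<in> hom_K2 V E" "v \<in> fst p" "x p \<noteq> 0"
    proof -
      have "alpha V E x v \<noteq> 0" using a by simp
      then obtain p where "p \<in> hom_K2 V E" "(if v \<in> fst p then x p else 0) \<noteq> 0"
        unfolding alpha_def using pos_sum_witness by blast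
      thus ?thesis using that by (auto split: if_splits)
    qed
    from b obtain q where q: "q \<in> hom_K2 V E" "u \<in> snd q" "x q \<noteq> 0"
    proof -
      have "beta V E x u \<noteq> 0" using b by simp
      then obtain p where "p \<in> hom_K2 V E" "(if u \<in> snd p then x p else 0) \<noteq> 0"
        unfolding beta_def using pos_sum_witness by blast
      thus ?thesis using that by (auto split: if_splits)
    qed
    from xr(3) p(3) q(3) have "hom_le p q \<or> hom_le q p" by blast
    thus "E v u"
    proof
      assume "hom_le p q"
      hence "v \<in> fst q" using p unfolding hom_le_def by blast
      thus ?thesis using q by (auto simp: hom_K2_def)
    next
      assume "hom_le q p"
      hence "u \<in> snd p" using q unfolding hom_le_def by blast
      thus ?thesis using p by (auto simp: hom_K2_def)
    qed
  qed
  obtain p where p: "p \<in> hom_K2 V E" "x p \<noteq> 0" using pos_sum_witness[of x "hom_K2 V E"] xr(2) by auto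
  hence xp: "x p > 0" using xr(1) by (metis order_less_le)
  obtain A B where AB: "p = (A,B)" by fastforce
  from p AB have "A \<noteq> {}" "B \<noteq> {}" "A \<subseteq> V" "B \<subseteq> V" by (auto simp: hom_K2_def)
  then obtain a b where ab: "a \<in> A" "b \<in> B" "a \<in> V" "b \<in> V" by blast
  have "x p \<le> alpha V E x a" unfolding alpha_def
    using member_le_sum[of p "hom_K2 V E" "\<lambda>q. if a \<in> fst q then x q else 0"] p(1) fin xr(1) ab AB by auto
  thus "\<exists>a\<in>V. alpha V E x a > 0" using xp ab by force
  have "x p \<le> beta V E x b" unfolding beta_def
    using member_le_sum[of p "hom_K2 V E" "\<lambda>q. if b \<in> snd q then x q else 0"] p(1) fin xr(1) ab AB by auto
  thus "\<exists>b\<in>V. beta V E x b > 0" using xp ab by force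
qed

lemma poly_sum_lt:
  fixes q :: "real poly"
  assumes "degree q < n" shows "poly q t = (\<Sum>e<n. coeff q e * t ^ e)"
proof -
  have "poly q t = (\<Sum>e\<le>degree q. coeff q e * t ^ e)" by (rule poly_altdef)
  also have "\<dots> = (\<Sum>e<n. coeff q e * t ^ e)"
    by (rule sum.mono_neutral_left) (use assms in \<open>auto simp: coeff_eq_0\<close>)
  finally show ?thesis .
qed

lemma wvec_block:
  assumes "i0 \<in> {1..m}" "e < 2*k"
  shows "wvec m k I c code v ((i0 - 1) * (2*k) + e) = (if I v = i0 then code (c i0 v) ^ e else 0)"
proof -
  let ?j = "(i0 - 1) * (2*k) + e"
  have k: "k > 0" using assms by simp
  have d: "?j div (2*k) = i0 - 1" "?j mod (2*k) = e" using assms by auto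
  have "?j < (i0 - 1) * (2*k) + 2*k" using assms by simp
  also have "\<dots> = i0 * (2*k)" using assms by (cases i0) auto
  also have "\<dots> \<le> m * (2*k)" using assms by simp
  finally have "?j < 2*m*k" by (simp add: algebra_simps)
  thus ?thesis unfolding wvec_def using d assms by auto
qed

lemma nonvanish:
  assumes G: "simple_graph V E" and col: "\<forall>i\<in>{1..m}. proper_coloring V E (c i)"
    and IV: "\<forall>v\<in>V. I v \<in> {1..m} \<and> card (c (I v) ` nbhd V E v) \<le> k"
    and inj: "inj_on code (\<Union>i\<in>{1..m}. c i ` V)"
    and x: "x \<in> hom_realization V E"
  shows "\<exists>j<2*m*k. Fm V E m k I c code x j \<noteq> 0"
proof (rule ccontr)
  assume "\<not> ?thesis"
  hence F0: "\<And>j. j < 2*m*k \<Longrightarrow> Fm V E m k I c code x j = 0" by auto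
  have finV: "finite V" and sym: "\<And>u v. E u v \<Longrightarrow> E v u" and irr: "\<And>v. \<not> E v v"
    and EV: "\<And>u v. E u v \<Longrightarrow> u \<in> V \<and> v \<in> V"
    using G by (auto simp: simple_graph_def)
  define \<alpha> where "\<alpha> = alpha V E x"
  define \<beta> where "\<beta> = beta V E x"
  define \<gamma> where "\<gamma> = (\<lambda>v. \<alpha> v - \<beta> v)"
  note ab = ab_props[OF G x, folded \<alpha>_def \<beta>_def]
  obtain a0 where a0: "a0 \<in> V" "\<alpha> a0 > 0" using ab(4) by blast
  obtain b0 where b0: "b0 \<in> V" "\<beta> b0 > 0" using ab(5) by blast
  have "E a0 b0" using ab(3) a0 b0 by blast
  define i0 where "i0 = I a0"
  have i0: "i0 \<in> {1..m}" "card (c i0 ` nbhd V E a0) \<le> k" using IV a0 unfolding i0_def by auto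
  have "b0 \<in> nbhd V E a0" using \<open>E a0 b0\<close> b0 by (simp add: nbhd_def)
  moreover have "finite (nbhd V E a0)" using finV by (simp add: nbhd_def)
  ultimately have "card (c i0 ` nbhd V E a0) \<ge> 1"
    by (metis One_nat_def Suc_leI card_gt_0_iff empty_iff finite_imageI image_eqI)
  hence kpos: "k \<ge> 1" using i0 by simp
  have beta_a0: "\<beta> a0 = 0"
  proof (rule ccontr)
    assume "\<beta> a0 \<noteq> 0" hence "\<beta> a0 > 0" using ab(2)[of a0] by simp
    thus False using ab(3) a0 irr by blast
  qed
  define Vi where "Vi = {v\<in>V. I v = i0}"
  have finVi: "finite Vi" using finV by (simp add: Vi_def)
  have a0Vi: "a0 \<in> Vi" using a0 by (simp add: Vi_def i0_def)
  define S where "S = (\<lambda>e. \<Sum>v\<in>Vi. \<gamma> v * code (c i0 v) ^ e)"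
  have S0: "S e = 0" if "e < 2*k" for e
  proof -
    let ?j = "(i0 - 1) * (2*k) + e"
    have "?j < (i0 - 1) * (2*k) + 2*k" using that by simp
    also have "\<dots> = i0 * (2*k)" using i0 by (cases i0) auto
    also have "\<dots> \<le> m * (2*k)" using i0 by simp
    finally have jl: "?j < 2*m*k" by (simp add: algebra_simps)
    have "Fm V E m k I c code x ?j = (\<Sum>v\<in>V. \<gamma> v * (if I v = i0 then code (c i0 v) ^ e else 0))"
      unfolding Fm_alt[OF finV] \<gamma>_def \<alpha>_def \<beta>_def by (simp only: wvec_block[OF i0(1) that])
    also have "\<dots> = S e" unfolding S_def Vi_def
      by (simp add: sum.inter_filter[OF finV, symmetric] if_distrib cong: if_cong)
    finally show ?thesis using F0[OF jl] by simp
  qed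
  show False
  proof (cases "\<exists>b\<in>Vi. \<beta> b > 0")
    case False
    hence "\<forall>v\<in>Vi. \<beta> v = 0" using ab(2) by (meson not_less order_antisym)
    hence "S 0 = (\<Sum>v\<in>Vi. \<alpha> v)" unfolding S_def \<gamma>_def by simp
    also have "\<dots> \<ge> \<alpha> a0" using member_le_sum[of a0 Vi \<alpha>] a0Vi finVi ab(1) by simp
    finally have "S 0 > 0" using a0 by simp
    thus False using S0[of 0] kpos by simp
  next
    case True
    then obtain b where b: "b \<in> Vi" "\<beta> b > 0" by blast
    have bV: "b \<in> V" "I b = i0" using b by (auto simp: Vi_def)
    define cd where "cd = (\<lambda>v. code (c i0 v))"
    define U where "U = cd ` {v\<in>Vi. \<gamma> v \<noteq> 0}"
    have "U \<subseteq> code ` (c i0 ` nbhd V E b \<union> c i0 ` nbhd V E a0)"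
    proof
      fix t assume "t \<in> U"
      then obtain v where v: "v \<in> Vi" "\<gamma> v \<noteq> 0" "t = cd v" unfolding U_def by blast
      have "\<alpha> v > 0 \<or> \<beta> v > 0" using v(2) ab(1)[of v] ab(2)[of v] unfolding \<gamma>_def by auto
      moreover have "v \<in> V" using v(1) by (simp add: Vi_def)
      moreover have "\<alpha> v > 0 \<Longrightarrow> E b v" using ab(3)[of v b] b(2) sym by blast
      moreover have "\<beta> v > 0 \<Longrightarrow> E a0 v" using ab(3)[of a0 v] a0(2) by blast
      ultimately have "v \<in> nbhd V E b \<or> v \<in> nbhd V E a0" unfolding nbhd_def by blast
      thus "t \<in> code ` (c i0 ` nbhd V E b \<union> c i0 ` nbhd V E a0)" using v(3) unfolding cd_def by blast
    qed
    moreover have "finite (c i0 ` nbhd V E b \<union> c i0 ` nbhd V E a0)" using finV by (simp add: nbhd_def)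
    ultimately have "card U \<le> card (c i0 ` nbhd V E b \<union> c i0 ` nbhd V E a0)"
      by (meson card_image_le card_mono finite_imageI order_trans)
    also have "\<dots> \<le> card (c i0 ` nbhd V E b) + card (c i0 ` nbhd V E a0)" by (rule card_Un_le)
    also have "\<dots> \<le> 2*k" using i0(2) IV[rule_format, OF bV(1)] bV(2) by simp
    finally have cardU: "card U \<le> 2*k" .
    have finU: "finite U" unfolding U_def using finVi by simp
    define t0 where "t0 = cd a0"
    have ga0: "\<gamma> a0 > 0" using a0 beta_a0 by (simp add: \<gamma>_def)
    have t0U: "t0 \<in> U" unfolding U_def t0_def using a0Vi ga0 by force
    define q where "q = (\<Prod>s\<in>U-{t0}. [:-s, 1:])"
    have "degree q \<le> (\<Sum>s\<in>U-{t0}. degree [:-s, (1::real):])"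
      unfolding q_def using degree_prod_sum_le[of "U-{t0}" "\<lambda>s. [:-s, (1::real):]"] finU by (simp add: o_def)
    also have "\<dots> = card (U - {t0})" by simp
    also have "\<dots> < 2*k" using cardU t0U finU kpos by (simp add: card_Diff_singleton)
    finally have degq: "degree q < 2*k" .
    have polyq: "poly q t = (\<Prod>s\<in>U-{t0}. t - s)" for t unfolding q_def by (simp add: poly_prod)
    have P0: "poly q t0 \<noteq> 0" unfolding polyq using finU by auto
    have "0 = (\<Sum>e<2*k. coeff q e * S e)" using S0 by simp
    also have "\<dots> = (\<Sum>v\<in>Vi. \<gamma> v * poly q (cd v))"
      unfolding S_def poly_sum_lt[OF degq] cd_def
      by (simp add: sum_distrib_left sum_distrib_right algebra_simps sum.swap[of _ Vi])
    also have "\<dots> = (\<Sum>v\<in>Vi. (if cd v = t0 then \<gamma> v else 0) * poly q t0)"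
    proof (rule sum.cong[OF refl])
      fix v assume v: "v \<in> Vi"
      show "\<gamma> v * poly q (cd v) = (if cd v = t0 then \<gamma> v else 0) * poly q t0"
      proof (cases "\<gamma> v = 0 \<or> cd v = t0")
        case True thus ?thesis by auto
      next
        case False
        hence "cd v \<in> U - {t0}" using v unfolding U_def by auto
        hence "poly q (cd v) = 0" unfolding polyq using finU by (auto intro: prod_zero)
        thus ?thesis using False by simp
      qed
    qed
    also have "\<dots> = (\<Sum>v\<in>Vi. if cd v = t0 then \<gamma> v else 0) * poly q t0"
      by (simp add: sum_distrib_right)
    finally have Z: "(\<Sum>v\<in>Vi. if cd v = t0 then \<gamma> v else 0) * poly q t0 = 0" by simp
    have nn: "\<And>v. v \<in> Vi \<Longrightarrow> (if cd v = t0 then \<gamma> v else 0) \<ge> 0"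
    proof -
      fix v assume v: "v \<in> Vi"
      show "(if cd v = t0 then \<gamma> v else 0) \<ge> 0"
      proof (cases "cd v = t0")
        case True
        have vV: "v \<in> V" using v by (simp add: Vi_def)
        have "c i0 v \<in> (\<Union>i\<in>{1..m}. c i ` V)" "c i0 a0 \<in> (\<Union>i\<in>{1..m}. c i ` V)"
          using vV a0 i0 by auto
        hence ceq: "c i0 v = c i0 a0" using True inj unfolding cd_def t0_def by (meson inj_onD)
        have "\<beta> v = 0"
        proof (rule ccontr)
          assume "\<beta> v \<noteq> 0" hence "\<beta> v > 0" using ab(2)[of v] by simp
          hence "E a0 v" using ab(3) a0 by blast
          hence "c i0 a0 \<noteq> c i0 v" using col i0(1) a0(1) vV unfolding proper_coloring_def by blast
          thus False using ceq by simp
        qed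
        thus ?thesis using True ab(1)[of v] by (simp add: \<gamma>_def)
      qed simp
    qed
    have "(\<Sum>v\<in>Vi. if cd v = t0 then \<gamma> v else 0) \<ge> (if cd a0 = t0 then \<gamma> a0 else 0)"
      by (rule member_le_sum[OF a0Vi]) (use nn finVi in auto)
    hence "(\<Sum>v\<in>Vi. if cd v = t0 then \<gamma> v else 0) > 0" using ga0 by (simp add: t0_def)
    thus False using Z P0 by simp
  qed
qed

lemma Fm_high: "j \<ge> 2*m*k \<Longrightarrow> Fm V E m k I c code x j = 0"
  unfolding Fm_def phi_def wvec_def by simp

lemma Fm_swap:
  assumes G: "simple_graph V E"
  shows "Fm V E m k I c code (hom_swap x) j = - Fm V E m k I c code x j"
proof -
  let ?H = "hom_K2 V E"
  let ?s = "\<lambda>p::('v set \<times> 'v set). (snd p, fst p)"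
  have sym: "\<And>u v. E u v \<Longrightarrow> E v u" using G by (auto simp: simple_graph_def)
  have Hs: "?s p \<in> ?H" if "p \<in> ?H" for p
    using that sym by (auto simp: hom_K2_def)
  have "Fm V E m k I c code (hom_swap x) j = (\<Sum>p\<in>?H. x (?s p) * phi m k I c code p j)"
    unfolding Fm_def hom_swap_def by (simp add: case_prod_beta)
  also have "\<dots> = (\<Sum>q\<in>?H. x q * phi m k I c code (?s q) j)"
    by (rule sum.reindex_bij_witness[of _ ?s ?s]) (auto intro: Hs)
  also have "\<dots> = (\<Sum>q\<in>?H. - (x q * phi m k I c code q j))"
    by (rule sum.cong) (auto simp: phi_def algebra_simps)
  also have "\<dots> = - Fm V E m k I c code x j" unfolding Fm_def by (simp add: sum_negf)
  finally show ?thesis .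
qed

lemma equivariant_exists:
  fixes code :: "'c \<Rightarrow> real" and c :: "nat \<Rightarrow> 'v \<Rightarrow> 'c"
  assumes G: "simple_graph V E" and col: "\<forall>i\<in>{1..m}. proper_coloring V E (c i)"
    and IV: "\<forall>v\<in>V. I v \<in> {1..m} \<and> card (c (I v) ` nbhd V E v) \<le> k"
    and inj: "inj_on code (\<Union>i\<in>{1..m}. c i ` V)"
  shows "hom_equivariant_map V E (2*m*k)"
proof -
  define N where "N = 2*m*k"
  define F where "F = Fm V E m k I c code"
  define D where "D = (\<lambda>x. sqrt (\<Sum>l<N. (F x l)\<^sup>2))"
  define f where "f = (\<lambda>x j. F x j / D x)"
  have finV: "finite V" using G by (simp add: simple_graph_def)
  have finH: "finite (hom_K2 V E)" using finite_hom[OF finV] .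
  let ?X = "hom_realization_top V E"
  have topX: "topspace ?X = hom_realization V E" unfolding hom_realization_top_def by simp
  have Dpos: "D x > 0" if xR: "x \<in> hom_realization V E" for x
  proof -
    obtain j where j: "j < 2*m*k" "F x j \<noteq> 0" using nonvanish[OF G col IV inj xR] F_def by blast
    have "(F x j)\<^sup>2 \<le> (\<Sum>l<N. (F x l)\<^sup>2)" using j by (intro member_le_sum) (auto simp: N_def)
    moreover have "(F x j)\<^sup>2 > 0" using j by simp
    ultimately have "(\<Sum>l<N. (F x l)\<^sup>2) > 0" by linarith
    thus ?thesis unfolding D_def by simp
  qed
  have cF: "continuous_map ?X euclideanreal (\<lambda>x. F x j)" for j
    unfolding F_def Fm_def hom_realization_top_def
    by (intro continuous_map_sum continuous_map_real_mult continuous_map_canonical_const finH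
        continuous_map_from_subtopology[OF continuous_map_product_projection]) auto
  have cD: "continuous_map ?X euclideanreal D"
    unfolding D_def by (intro continuous_map_sqrt continuous_map_sum continuous_map_real_pow cF) auto
  have cf: "continuous_map ?X (product_topology (\<lambda>_. euclideanreal) UNIV) f"
    unfolding continuous_map_componentwise_UNIV f_def
    using Dpos topX by (intro allI continuous_map_real_divide cF cD) (metis less_irrefl)
  have insph: "f x \<in> {y. (\<Sum>i<N. (y i)\<^sup>2) = 1 \<and> (\<forall>i\<ge>N. y i = 0)}" if "x \<in> hom_realization V E" for x
  proof -
    have dp: "D x > 0" using Dpos[OF that] .
    have "(\<Sum>i<N. (f x i)\<^sup>2) = (\<Sum>i<N. (F x i)\<^sup>2) / (D x)\<^sup>2"
      unfolding f_def by (simp add: power_divide sum_divide_distrib)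
    also have "(D x)\<^sup>2 = (\<Sum>i<N. (F x i)\<^sup>2)" unfolding D_def by (simp add: sum_nonneg)
    finally have "(\<Sum>i<N. (f x i)\<^sup>2) = 1" using dp by (simp add: D_def)
    moreover have "\<forall>i\<ge>N. f x i = 0" unfolding f_def F_def N_def by (simp add: Fm_high)
    ultimately show ?thesis by simp
  qed
  have "continuous_map ?X (sphere_top N) f"
    unfolding sphere_top_def continuous_map_in_subtopology using cf insph topX by auto
  moreover have "\<forall>x\<in>hom_realization V E. f (hom_swap x) = (\<lambda>i. - f x i)"
    unfolding f_def D_def F_def by (simp add: Fm_swap[OF G])
  ultimately show ?thesis unfolding hom_equivariant_map_def N_def by blast
qed

theorem corollary1p2:
  fixes V :: "'v set" and E :: "'v \<Rightarrow> 'v \<Rightarrow> bool"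
    and c :: "nat \<Rightarrow> 'v \<Rightarrow> 'c" and m :: nat
  assumes "simple_graph V E" and "V \<noteq> {}" and "m \<ge> 1"
    and "\<forall>i\<in>{1..m}. proper_coloring V E (c i)"
  shows "\<exists>v\<in>V. \<forall>i\<in>{1..m}.
           int (card (c i ` nbhd V E v)) \<ge> \<lfloor>real_of_int (hom_index V E) / (2 * real m)\<rfloor> + 1"
proof (rule ccontr)
  assume neg: "\<not> ?thesis"
  define K where "K = \<lfloor>real_of_int (hom_index V E) / (2 * real m)\<rfloor>"
  have h: "\<forall>v\<in>V. \<exists>i\<in>{1..m}. int (card (c i ` nbhd V E v)) \<le> K"
  proof
    fix v assume "v \<in> V"
    with neg obtain i where "i \<in> {1..m}" "\<not> (int (card (c i ` nbhd V E v)) \<ge> K + 1)"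
      unfolding K_def by blast
    thus "\<exists>i\<in>{1..m}. int (card (c i ` nbhd V E v)) \<le> K" by (intro bexI[of _ i]) auto
  qed
  obtain v0 where "v0 \<in> V" using assms(2) by blast
  then obtain i where "int (card (c i ` nbhd V E v0)) \<le> K" using h by blast
  hence K0: "K \<ge> 0" by linarith
  define k where "k = nat K"
  have h2: "\<forall>v\<in>V. \<exists>i. i \<in> {1..m} \<and> card (c i ` nbhd V E v) \<le> k"
  proof
    fix v assume "v \<in> V"
    then obtain i where "i \<in> {1..m}" "int (card (c i ` nbhd V E v)) \<le> K" using h by blast
    hence "i \<in> {1..m} \<and> card (c i ` nbhd V E v) \<le> k" unfolding k_def by (metis nat_int nat_mono)
    thus "\<exists>i. i \<in> {1..m} \<and> card (c i ` nbhd V E v) \<le> k" by blast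
  qed
  then obtain I where IV: "\<forall>v\<in>V. I v \<in> {1..m} \<and> card (c (I v) ` nbhd V E v) \<le> k"
    using bchoice[OF h2] by blast
  have finV: "finite V" using assms(1) by (simp add: simple_graph_def)
  have finC: "finite (\<Union>i\<in>{1..m}. c i ` V)" using finV by simp
  obtain g :: "'c \<Rightarrow> nat" where g: "inj_on g (\<Union>i\<in>{1..m}. c i ` V)"
  proof -
    from finite_imp_inj_to_nat_seg[OF finC] obtain g :: "'c \<Rightarrow> nat" and n
      where "g ` (\<Union>i\<in>{1..m}. c i ` V) = {i. i < n}" "inj_on g (\<Union>i\<in>{1..m}. c i ` V)"
      by (elim exE conjE)
    thus ?thesis using that by simp
  qed
  define code where "code = (\<lambda>t. real (g t))"
  have inj: "inj_on code (\<Union>i\<in>{1..m}. c i ` V)"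
    using g unfolding code_def inj_on_def by simp
  have "hom_equivariant_map V E (2*m*k)"
    by (rule equivariant_exists[OF assms(1) assms(4) IV inj])
  hence "(LEAST n. hom_equivariant_map V E n) \<le> 2*m*k" by (rule Least_le)
  hence "int (LEAST n. hom_equivariant_map V E n) \<le> int (2*m*k)" by (simp only: of_nat_le_iff)
  hence hi: "hom_index V E \<le> int (2*m*k) - 1" unfolding hom_index_def by linarith
  have mpos: "real m > 0" using assms(3) by simp
  have "real_of_int (hom_index V E) \<le> real_of_int (int (2*m*k) - 1)" using hi by (simp only: of_int_le_iff)
  hence "real_of_int (hom_index V E) \<le> 2 * real m * real k - 1" by simp
  hence "real_of_int (hom_index V E) / (2 * real m) < real k"
    using mpos by (simp add: divide_less_eq algebra_simps)
  hence "K < int k" unfolding K_def by (simp add: floor_less_iff)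
  thus False using K0 unfolding k_def by simp
qed

end
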